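(* Let $n$ be a positive integer and $r$ an integer with $0\le r\le \lceil n/2\rceil$, and let $d_\star=d_\star(r,n)$ be an integer maximising $q_n^{r,d}$ over all integers $d$. Then either \[ d_\star = \left\lceil \frac{(n-2r)^2+2n-5r-1}{n-r+3}\right\rceil \quad\text{or}\quad d_\star = \frac{(n-2r)^2+2n-5r-1}{n-r+3}+1. \]
   Context: $Q(P_n)$ is the family of subsets of $[n]$ containing no two consecutive integers, and $Q^{(r)}(P_n)$ its members of size $r$. The out-degree $d^+(A)$ of $A\in Q(P_n)$ is the number of $b\in[n]\setminus A$ with $A\cup\{b\}\in Q(P_n)$. $q_n^{r,d}$ is the number of $A\in Q^{(r)}(P_n)$ with $d^+(A)=d$. *)

theory Defs
  imports Complex_Main
begin

definition indep_path :: "nat \<Rightarrow> nat set set" where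
  "indep_path n = {A. A \<subseteq> {1..n} \<and> (\<forall>i\<in>A. Suc i \<notin> A)}"

definition outdeg :: "nat \<Rightarrow> nat set \<Rightarrow> nat" where
  "outdeg n A = card {b \<in> {1..n} - A. insert b A \<in> indep_path n}"

definition qcount :: "nat \<Rightarrow> nat \<Rightarrow> int \<Rightarrow> nat" where
  "qcount n r d = card {A \<in> indep_path n. card A = r \<and> int (outdeg n A) = d}"

end

theory Submission
  imports Defs
begin


definition freev :: "nat \<Rightarrow> nat set \<Rightarrow> nat set" where
  "freev n A = {b\<in>{1..n}. b \<notin> A \<and> Suc b \<notin> A \<and> (\<forall>i\<in>A. Suc i \<noteq> b)}"

lemma outdeg_free: "A \<in> indep_path n \<Longrightarrow> outdeg n A = card (freev n A)"
  unfolding outdeg_def freev_def indep_path_def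
  by (rule arg_cong[where f=card]) auto

lemma finite_indep: "finite (indep_path n)"
  by (rule finite_subset[of _ "Pow {1..n}"]) (auto simp: indep_path_def)

lemma free_Suc: "A \<in> indep_path n \<Longrightarrow>
   freev (Suc n) A = freev n A \<union> (if n \<in> A then {} else {Suc n})"
  unfolding freev_def indep_path_def by (auto simp: le_Suc_eq)

lemma outdeg_Suc: "A \<in> indep_path n \<Longrightarrow>
   outdeg (Suc n) A = outdeg n A + (if n \<in> A then 0 else 1)"
proof -
  assume A: "A \<in> indep_path n"
  hence A': "A \<in> indep_path (Suc n)" by (auto simp: indep_path_def)
  have "Suc n \<notin> freev n A" by (auto simp: freev_def)
  moreover have "finite (freev n A)" by (auto simp: freev_def)
  ultimately show ?thesis
    using outdeg_free[OF A] outdeg_free[OF A'] free_Suc[OF A] by auto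
qed

lemma indep_Suc_notin: "{A \<in> indep_path (Suc n). Suc n \<notin> A} = indep_path n"
  unfolding indep_path_def by (auto simp: le_Suc_eq subset_iff)

lemma indep_SS_in: "{A \<in> indep_path (Suc (Suc n)). Suc (Suc n) \<in> A}
   = insert (Suc (Suc n)) ` indep_path n"
proof (intro equalityI subsetI)
  fix A assume "A \<in> {A \<in> indep_path (Suc (Suc n)). Suc (Suc n) \<in> A}"
  hence A: "A \<subseteq> {1..Suc (Suc n)}" "\<forall>i\<in>A. Suc i \<notin> A" "Suc (Suc n) \<in> A"
    by (auto simp: indep_path_def)
  have "Suc n \<notin> A" using A by auto
  hence "A - {Suc (Suc n)} \<in> indep_path n" using A
    by (auto simp: indep_path_def subset_iff le_Suc_eq)
  moreover have "A = insert (Suc (Suc n)) (A - {Suc (Suc n)})" using A by auto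
  ultimately show "A \<in> insert (Suc (Suc n)) ` indep_path n" by blast
next
  fix A assume "A \<in> insert (Suc (Suc n)) ` indep_path n"
  then obtain B where B: "B \<in> indep_path n" "A = insert (Suc (Suc n)) B" by auto
  thus "A \<in> {A \<in> indep_path (Suc (Suc n)). Suc (Suc n) \<in> A}"
    by (auto simp: indep_path_def subset_iff)
qed

lemma outdeg_SS: "B \<in> indep_path n \<Longrightarrow>
   outdeg (Suc (Suc n)) (insert (Suc (Suc n)) B) = outdeg n B"
proof -
  assume B: "B \<in> indep_path n"
  have B': "insert (Suc (Suc n)) B \<in> indep_path (Suc (Suc n))"
    using indep_SS_in[of n] B by blast
  have "freev (Suc (Suc n)) (insert (Suc (Suc n)) B) = freev n B"
    using B unfolding freev_def indep_path_def
    by (auto simp: subset_iff le_Suc_eq)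
  thus ?thesis using outdeg_free[OF B] outdeg_free[OF B'] by simp
qed

definition Ecnt :: "nat \<Rightarrow> nat \<Rightarrow> int \<Rightarrow> nat" where
  "Ecnt n r d = card {A \<in> indep_path n. card A = r \<and> int (outdeg n A) = d \<and> n \<notin> A}"
definition Icnt :: "nat \<Rightarrow> nat \<Rightarrow> int \<Rightarrow> nat" where
  "Icnt n r d = card {A \<in> indep_path n. card A = r \<and> int (outdeg n A) = d \<and> n \<in> A}"

lemma card_split:
  assumes "finite S"
  shows "card {A\<in>S. P A} = card {A\<in>S. P A \<and> Q A} + card {A\<in>S. P A \<and> \<not> Q A}"
proof -
  have "{A\<in>S. P A} = {A\<in>S. P A \<and> Q A} \<union> {A\<in>S. P A \<and> \<not> Q A}" by auto
  moreover have "{A\<in>S. P A \<and> Q A} \<inter> {A\<in>S. P A \<and> \<not> Q A} = {}" by auto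
  moreover have "finite {A\<in>S. P A \<and> Q A}" "finite {A\<in>S. P A \<and> \<not> Q A}" using assms by auto
  ultimately show ?thesis using card_Un_disjoint[of "{A\<in>S. P A \<and> Q A}" "{A\<in>S. P A \<and> \<not> Q A}"] by simp
qed

lemma qcount_split: "qcount n r d = Ecnt n r d + Icnt n r d"
  unfolding qcount_def Ecnt_def Icnt_def
  using card_split[OF finite_indep[of n], where P="\<lambda>A. card A = r \<and> int (outdeg n A) = d" and Q="\<lambda>A. n \<notin> A"]
  by (simp add: conj_assoc add.commute)

lemma Ecnt_Suc: "Ecnt (Suc n) r d = Ecnt n r (d-1) + Icnt n r d"
proof -
  have "{A \<in> indep_path (Suc n). card A = r \<and> int (outdeg (Suc n) A) = d \<and> Suc n \<notin> A}
     = {A \<in> indep_path n. card A = r \<and> int (outdeg n A) = d - 1 \<and> n \<notin> A}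
     \<union> {A \<in> indep_path n. card A = r \<and> int (outdeg n A) = d \<and> n \<in> A}" (is "?L = ?R1 \<union> ?R2")
  proof -
    have "?L = {A \<in> indep_path n. card A = r \<and> int (outdeg (Suc n) A) = d}"
      using indep_Suc_notin[of n] by blast
    also have "\<dots> = ?R1 \<union> ?R2"
      using outdeg_Suc[of _ n] by (auto split: if_splits)
    finally show ?thesis .
  qed
  moreover have "?R1 \<inter> ?R2 = {}" by blast
  moreover have "finite ?R1" "finite ?R2" using finite_indep[of n] by auto
  ultimately show ?thesis unfolding Ecnt_def Icnt_def by (simp add: card_Un_disjoint)
qed

lemma Icnt_SS: "Icnt (Suc (Suc n)) r d = (if r = 0 then 0 else Ecnt n (r-1) d + Icnt n (r-1) d)"
proof -
  have "{A \<in> indep_path (Suc (Suc n)). card A = r \<and> int (outdeg (Suc (Suc n)) A) = d \<and> Suc (Suc n) \<in> A}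
     = insert (Suc (Suc n)) ` {B \<in> indep_path n. Suc (card B) = r \<and> int (outdeg n B) = d}" (is "?L = _ ` ?S")
  proof -
    have nin: "B \<in> indep_path n \<Longrightarrow> Suc (Suc n) \<notin> B" for B by (auto simp: indep_path_def)
    have fin: "B \<in> indep_path n \<Longrightarrow> finite B" for B
      by (auto simp: indep_path_def intro: finite_subset)
    have "?L = {A \<in> insert (Suc (Suc n)) ` indep_path n. card A = r \<and> int (outdeg (Suc (Suc n)) A) = d}"
      using indep_SS_in[of n] by blast
    also have "\<dots> = insert (Suc (Suc n)) ` {B \<in> indep_path n. card (insert (Suc (Suc n)) B) = r \<and> int (outdeg (Suc (Suc n)) (insert (Suc (Suc n)) B)) = d}"
      by blast
    also have "\<dots> = insert (Suc (Suc n)) ` ?S"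
      by (rule arg_cong[where f="image _"], rule Collect_cong) (metis outdeg_SS nin fin card_insert_disjoint)
    finally show ?thesis .
  qed
  moreover have "inj_on (insert (Suc (Suc n))) ?S"
  proof (rule inj_onI)
    fix B C assume "B \<in> ?S" "C \<in> ?S" "insert (Suc (Suc n)) B = insert (Suc (Suc n)) C"
    moreover have "Suc (Suc n) \<notin> B" "Suc (Suc n) \<notin> C" using calculation
      by (auto simp: indep_path_def)
    ultimately show "B = C" by (simp add: insert_ident)
  qed
  ultimately have "Icnt (Suc (Suc n)) r d = card ?S" unfolding Icnt_def by (simp add: card_image)
  moreover have "card ?S = (if r = 0 then 0 else qcount n (r-1) d)"
    unfolding qcount_def by (cases r) auto
  ultimately show ?thesis by (simp add: qcount_split)
qed

lemma indep0: "indep_path 0 = {{}}" by (auto simp: indep_path_def)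
lemma indep1: "indep_path 1 = {{}, {1}}" by (auto simp: indep_path_def)

lemma Icnt_0: "Icnt 0 r d = 0" by (simp add: Icnt_def indep0)
lemma Ecnt_0: "Ecnt 0 r d = (if r = 0 \<and> d = 0 then 1 else 0)"
proof -
  have "{A. A = {} \<and> card A = r \<and> int (outdeg 0 A) = d \<and> 0 \<notin> A} = (if r = 0 \<and> d = 0 then {{}} else {})"
    by (auto simp: outdeg_def)
  thus ?thesis by (simp add: Ecnt_def indep0)
qed
lemma Icnt_1: "Icnt 1 r d = (if r = 1 \<and> d = 0 then 1 else 0)"
proof -
  have "outdeg 1 {1} = 0" by (auto simp: outdeg_def)
  hence "{A \<in> indep_path 1. card A = r \<and> int (outdeg 1 A) = d \<and> 1 \<in> A} = (if r = 1 \<and> d = 0 then {{1}} else {})"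
    unfolding indep1 by auto
  thus ?thesis by (simp add: Icnt_def)
qed



definition bc :: "int \<Rightarrow> int \<Rightarrow> nat" where
  "bc a b = (if a < 0 \<or> b < 0 then 0 else nat a choose nat b)"

lemma bc_neg1[simp]: "a < 0 \<Longrightarrow> bc a b = 0" by (simp add: bc_def)
lemma bc_neg2[simp]: "b < 0 \<Longrightarrow> bc a b = 0" by (simp add: bc_def)
lemma bc_big: "b > a \<Longrightarrow> bc a b = 0" by (simp add: bc_def)
lemma bc_0[simp]: "a \<ge> 0 \<Longrightarrow> bc a 0 = 1" by (simp add: bc_def)
lemma bc_zero: "bc 0 b = (if b = 0 then 1 else 0)"
  by (auto simp: bc_def)
lemma bc_diag: "a \<ge> 0 \<Longrightarrow> bc a a = 1" by (simp add: bc_def)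

lemma bc_pascal: assumes "a \<ge> 1" shows "bc a b = bc (a-1) (b-1) + bc (a-1) b"
proof (cases "b < 0")
  case True thus ?thesis by simp
next
  case False
  show ?thesis
  proof (cases "b = 0")
    case True thus ?thesis using assms by simp
  next
    case False
    with \<open>\<not> b < 0\<close> have "b \<ge> 1" by simp
    have A: "a = int (Suc (nat a - 1))" using assms by simp
    have B: "b = int (Suc (nat b - 1))" using \<open>b \<ge> 1\<close> by simp
    define A' where "A' = nat a - 1"
    define B' where "B' = nat b - 1"
    have "bc a b = Suc A' choose Suc B'" using assms \<open>b \<ge> 1\<close> by (simp add: bc_def A'_def B'_def Suc_nat_eq_nat_zadd1)
    moreover have "bc (a-1) (b-1) = A' choose B'" using assms \<open>b \<ge> 1\<close> by (simp add: bc_def A'_def B'_def nat_diff_distrib)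
    moreover have "bc (a-1) b = A' choose Suc B'" using assms \<open>b \<ge> 1\<close> by (simp add: bc_def A'_def B'_def nat_diff_distrib Suc_nat_eq_nat_zadd1)
    ultimately show ?thesis by simp
  qed
qed

lemma nat_absorb: "Suc k * (a choose Suc k) = (a - k) * (a choose k)"
proof (cases a)
  case 0 thus ?thesis by simp
next
  case (Suc a')
  thus ?thesis using Suc_times_binomial[of k a'] binomial_absorb_comp[of a k] by simp
qed

lemma bc_absorb: assumes "a \<ge> 0" "k \<ge> 0"
  shows "int (bc a (k+1)) * (k+1) = int (bc a k) * (a - k)"
proof -
  obtain A K where AK: "a = int A" "k = int K" using assms by (metis nonneg_eq_int)
  have "k + 1 = int (Suc K)" using AK by simp
  hence "int (bc a (k+1)) * (k+1) = int (Suc K * (A choose Suc K))"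
  proof -
    have e: "nat (k+1) = Suc K" "nat a = A" "nat k = K" using AK by auto
    have "int (bc a (k+1)) * (k+1) = int (A choose Suc K) * int (Suc K)"
    proof -
      have "nat (int K + 1) = Suc K" "nat (1 + int K) = Suc K" by simp_all
      thus ?thesis using AK by (simp add: bc_def add.commute)
    qed
    thus ?thesis by (simp only: of_nat_mult[symmetric] mult.commute)
  qed
  also have "\<dots> = int ((A - K) * (A choose K))" by (simp only: nat_absorb)
  also have "\<dots> = int (bc a k) * (a - k)"
  proof (cases "K \<le> A")
    case True thus ?thesis using AK by (simp add: bc_def of_nat_diff)
  next
    case False thus ?thesis using AK by (simp add: bc_def)
  qed
  finally show ?thesis .
qed

definition Efm :: "nat \<Rightarrow> nat \<Rightarrow> int \<Rightarrow> nat" where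
  "Efm n r d = bc (int r) (int n + 1 - 2*int r - d - 1) * bc (int n + 1 - 2*int r - 1) d"
definition Ifm :: "nat \<Rightarrow> nat \<Rightarrow> int \<Rightarrow> nat" where
  "Ifm n r d = (if int n + 1 - 2*int r = 0 then (if d = 0 then 1 else 0)
      else bc (int r) (int n + 1 - 2*int r - d) * bc (int n + 1 - 2*int r - 1) d)"

lemma F1: "Efm (Suc n) r d = Efm n r (d-1) + Ifm n r d"
proof -
  define M where "M = int n + 1 - 2*int r"
  have L: "Efm (Suc n) r d = bc (int r) (M-d) * bc M d" by (simp add: Efm_def M_def algebra_simps)
  have R1: "Efm n r (d-1) = bc (int r) (M-d) * bc (M-1) (d-1)" by (simp add: Efm_def M_def algebra_simps)
  have R2: "Ifm n r d = (if M = 0 then (if d = 0 then 1 else 0) else bc (int r) (M-d) * bc (M-1) d)"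
    by (simp add: Ifm_def M_def)
  consider "M < 0" | "M = 0" | "M \<ge> 1" by linarith
  thus ?thesis
  proof cases
    case 1 thus ?thesis using L R1 R2 by simp
  next
    case 2 thus ?thesis using L R1 R2 by (simp add: bc_zero)
  next
    case 3 thus ?thesis using L R1 R2 bc_pascal[OF 3, of d] by (simp add: algebra_simps)
  qed
qed

lemma F2: "Ifm (Suc (Suc n)) r d = (if r = 0 then 0 else Efm n (r-1) d + Ifm n (r-1) d)"
proof (cases r)
  case 0
  have "bc (int n + 3 - d) (int n + 3) = 0" if "d = int n + 3" for d :: int
    using that by (simp add: bc_big)
  moreover have "bc (int n + 2) (int n + 3) = 0" by (simp add: bc_big)
  ultimately show ?thesis using 0 by (auto simp: Ifm_def bc_zero algebra_simps)
next
  case (Suc r')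
  define M where "M = int n + 1 - 2*int r'"
  have L: "Ifm (Suc (Suc n)) r d = (if M = 0 then (if d = 0 then 1 else 0) else bc (int r' + 1) (M-d) * bc (M-1) d)"
    using Suc by (simp add: Ifm_def M_def algebra_simps)
  have R1: "Efm n (r-1) d = bc (int r') (M-d-1) * bc (M-1) d" using Suc by (simp add: Efm_def M_def)
  have R2: "Ifm n (r-1) d = (if M = 0 then (if d = 0 then 1 else 0) else bc (int r') (M-d) * bc (M-1) d)"
    using Suc by (simp add: Ifm_def M_def)
  show ?thesis using L R1 R2 Suc bc_pascal[of "int r' + 1" "M-d"] by (simp add: algebra_simps)
qed

lemma F3: "Ifm 1 r d = (if r = 1 \<and> d = 0 then 1 else 0)"
proof -
  consider "r = 0" | "r = 1" | "r \<ge> 2" by linarith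
  thus ?thesis
  proof cases
    case 1
    have "bc 1 d = 0" if "d = 2" for d :: int using that by (simp add: bc_big)
    thus ?thesis using 1 by (auto simp: Ifm_def bc_zero)
  qed (auto simp: Ifm_def)
qed

lemma F4: "Efm 0 r d = (if r = 0 \<and> d = 0 then 1 else 0)"
  by (cases r) (auto simp: Efm_def bc_zero)

lemma F5: "Ifm 0 r d = 0"
  by (cases r) (auto simp: Ifm_def bc_zero)

lemma closed: "Ecnt n r d = Efm n r d \<and> Icnt n r d = Ifm n r d"
proof (induction n arbitrary: r d rule: less_induct)
  case (less n)
  consider "n = 0" | "n = 1" | m where "n = Suc (Suc m)" by (metis One_nat_def not0_implies_Suc)
  thus ?case
  proof cases
    case 1 thus ?thesis by (simp add: Ecnt_0 Icnt_0 F4 F5)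
  next
    case 2 thus ?thesis
      using Ecnt_Suc[of 0 r d] F1[of 0 r d] Icnt_1[of r d] F3[of r d] by (simp add: Ecnt_0 Icnt_0 F4 F5)
  next
    case 3
    have "Ecnt n r d = Efm n r d"
      using Ecnt_Suc[of "Suc m" r d] F1[of "Suc m" r d] less[of "Suc m"] 3 by simp
    moreover have "Icnt n r d = Ifm n r d"
      using Icnt_SS[of m r d] F2[of m r d] less[of m] 3 by simp
    ultimately show ?thesis ..
  qed
qed



lemma qcount_closed: "qcount n r d = Efm n r d + Ifm n r d"
  using closed[of n r d] qcount_split[of n r d] by simp

lemma absorb_prod:
  fixes a0 a1 b0 b1 j p q :: int
  assumes "a1 * (j+1) = a0 * p" "b1 * j = b0 * q"
  shows "(a1 * b1) * (j * (j+1)) = (a0 * b0) * (p * q)"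
proof -
  have "(a1 * b1) * (j * (j+1)) = (a1 * (j+1)) * (b1 * j)" by (simp add: algebra_simps)
  also have "\<dots> = (a0 * b0) * (p * q)" using assms by (simp add: algebra_simps)
  finally show ?thesis .
qed

lemma cancel_le:
  fixes g A B :: int
  assumes "g > 0" "g * A \<le> g * B" shows "A \<le> B"
  using assms by simp

theorem mainTheorem5:
  fixes n r :: nat and dstar :: int
  assumes "n \<ge> 1"
    and "real r \<le> real_of_int \<lceil>real n / 2\<rceil>"
    and "\<forall>d::int. qcount n r d \<le> qcount n r dstar"
  shows "dstar = \<lceil>((real n - 2 * real r)\<^sup>2 + 2 * real n - 5 * real r - 1) / (real n - real r + 3)\<rceil>
         \<or> real_of_int dstar = ((real n - 2 * real r)\<^sup>2 + 2 * real n - 5 * real r - 1) / (real n - real r + 3) + 1"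
proof -
  define M where "M = int n + 1 - 2 * int r"
  have "real_of_int \<lceil>real n / 2\<rceil> - 1 < real n / 2" using ceiling_correct by blast
  hence "2 * real r < real n + 2" using assms(2) by linarith
  hence "2 * r < n + 2" by linarith
  hence M0: "M \<ge> 0" unfolding M_def by linarith
  have Dpos: "real n - real r + 3 > 0" using \<open>2 * r < n + 2\<close> by linarith
  have Efm: "Efm n r d = bc (int r) (M - d - 1) * bc (M - 1) d" for d
    by (simp add: Efm_def M_def)
  have Ifm: "Ifm n r d = (if M = 0 then (if d = 0 then 1 else 0) else bc (int r) (M - d) * bc (M - 1) d)" for d
    by (simp add: Ifm_def M_def)
  consider "M = 0" | "M \<ge> 1" using M0 by linarith
  thus ?thesis
  proof cases
    case 1
    have q: "qcount n r d = (if d = 0 then 1 else 0)" for d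
      using qcount_closed[of n r d] Efm[of d] Ifm[of d] 1 by simp
    from assms(3) have "qcount n r 0 \<le> qcount n r dstar" by blast
    hence "dstar = 0" using q[of 0] q[of dstar] by (simp split: if_splits)
    moreover have hn: "real n = 2 * real r - 1" using 1 unfolding M_def by linarith
    have "real r + 2 > 0" by simp
    hence "((real n - 2 * real r)\<^sup>2 + 2 * real n - 5 * real r - 1) / (real n - real r + 3) = -1"
      unfolding hn by (simp add: field_simps power2_eq_square)
    ultimately show ?thesis by simp
  next
    case 2
    have q: "qcount n r d = bc (int r + 1) (M - d) * bc (M - 1) d" for d
      using qcount_closed[of n r d] Efm[of d] Ifm[of d] 2 bc_pascal[of "int r + 1" "M - d"]
      by (simp add: algebra_simps)
    define g where "g j = int (bc (int r + 1) j * bc (M - 1) (M - j))" for j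
    have gq: "int (qcount n r d) = g (M - d)" for d by (simp add: g_def q)
    define k where "k = M - dstar"
    have dk: "dstar = M - k" by (simp add: k_def)
    have gmax: "g j \<le> g k" for j
      using assms(3) gq[of "M - j"] gq[of dstar] by (simp add: k_def) (metis of_nat_le_iff)
    have g1: "g 1 = int r + 1"
    proof -
      have "bc (int r + 1) 1 = r + 1" by (simp add: bc_def nat_add_distrib)
      moreover have "bc (M - 1) (M - 1) = 1" using 2 by (simp add: bc_diag)
      ultimately show ?thesis by (simp add: g_def)
    qed
    have gpos: "g k > 0" using gmax[of 1] g1 by linarith
    hence b1: "bc (int r + 1) k \<noteq> 0" and b2: "bc (M - 1) (M - k) \<noteq> 0"
      unfolding g_def by (metis mult_zero_left mult_zero_right of_nat_0 less_irrefl)+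
    have k1: "k \<ge> 1"
    proof (rule ccontr)
      assume "\<not> k \<ge> 1"
      hence "M - k > M - 1" by linarith
      thus False using b2 bc_big[of "M - 1" "M - k"] by simp
    qed
    have kr: "k \<le> int r + 1"
    proof (rule ccontr)
      assume "\<not> k \<le> int r + 1"
      thus False using b1 bc_big[of "int r + 1" k] by simp
    qed
    have kM: "k \<le> M"
    proof (rule ccontr)
      assume "\<not> k \<le> M"
      thus False using b2 bc_neg2[of "M - k" "M - 1"] by simp
    qed
    have ident: "g (j+1) * (j * (j+1)) = g j * ((int r + 1 - j) * (M - j))"
      if "1 \<le> j" "j \<le> M - 1" for j
    proof -
      have e1: "int (bc (int r + 1) (j+1)) * (j+1) = int (bc (int r + 1) j) * (int r + 1 - j)"
        using bc_absorb[of "int r + 1" j] that by simp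
      have e2: "int (bc (M - 1) (M - (j+1) + 1)) * (M - (j+1) + 1)
          = int (bc (M - 1) (M - (j+1))) * (M - 1 - (M - (j+1)))"
        using bc_absorb[of "M - 1" "M - (j+1)"] that by simp
      have e2': "int (bc (M - 1) (M - (j+1))) * j = int (bc (M - 1) (M - j)) * (M - j)"
        using e2 by (simp add: algebra_simps)
      show ?thesis unfolding g_def of_nat_mult
        using absorb_prod[OF e1 e2'] by simp
    qed
    have low: "(k - 1) * (int r + M + 2) \<le> (int r + 1) * M"
    proof (cases "k = 1")
      case True thus ?thesis using 2 by simp
    next
      case False
      hence "k - 1 \<ge> 1" using k1 by simp
      have id: "g k * ((k - 1) * k) = g (k - 1) * ((int r + 2 - k) * (M - k + 1))"
        using ident[of "k - 1"] \<open>k - 1 \<ge> 1\<close> kM by (simp add: algebra_simps)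
      have Bnn: "(int r + 2 - k) * (M - k + 1) \<ge> 0" using kr kM by simp
      have "g (k - 1) * ((int r + 2 - k) * (M - k + 1)) \<le> g k * ((int r + 2 - k) * (M - k + 1))"
        using gmax[of "k - 1"] Bnn by (simp add: mult_right_mono)
      hence "(k - 1) * k \<le> (int r + 2 - k) * (M - k + 1)"
        using id gpos cancel_le by metis
      thus ?thesis by (simp add: algebra_simps)
    qed
    have up: "(int r + 1) * M \<le> k * (int r + M + 2)"
    proof (cases "k \<ge> int r + 1 \<or> k \<ge> M")
      case True
      thus ?thesis
      proof
        assume h: "k \<ge> int r + 1"
        have "(int r + 1) * M \<le> (int r + 1) * (int r + M + 2)" by simp
        also have "\<dots> \<le> k * (int r + M + 2)" using h 2 by (intro mult_right_mono) auto
        finally show ?thesis .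
      next
        assume h: "k \<ge> M"
        have "(int r + 1) * M = M * (int r + 1)" by simp
        also have "\<dots> \<le> M * (int r + M + 2)" using 2 by simp
        also have "\<dots> \<le> k * (int r + M + 2)" using h 2 by (intro mult_right_mono) auto
        finally show ?thesis .
      qed
    next
      case False
      have id: "g (k+1) * (k * (k+1)) = g k * ((int r + 1 - k) * (M - k))"
        using ident[of k] k1 False by simp
      have Ann: "k * (k+1) \<ge> 0" using k1 by simp
      have "g (k+1) * (k * (k+1)) \<le> g k * (k * (k+1))"
        using gmax[of "k+1"] Ann by (simp add: mult_right_mono)
      hence "(int r + 1 - k) * (M - k) \<le> k * (k+1)"
        using id gpos cancel_le by metis
      thus ?thesis by (simp add: algebra_simps)
    qed
    define N R K where "N = real n" "R = real r" "K = real_of_int k"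
    have Mr: "real_of_int M = N + 1 - 2 * R" by (simp add: M_def N_R_K_def)
    have dr: "real_of_int dstar = N + 1 - 2 * R - K" by (simp add: dk Mr N_R_K_def)
    have low': "(K - 1) * (R + (N + 1 - 2 * R) + 2) \<le> (R + 1) * (N + 1 - 2 * R)"
    proof -
      have "real_of_int ((k - 1) * (int r + M + 2)) \<le> real_of_int ((int r + 1) * M)"
        using low by (simp only: of_int_le_iff)
      thus ?thesis by (simp add: Mr N_R_K_def)
    qed
    have up': "(R + 1) * (N + 1 - 2 * R) \<le> K * (R + (N + 1 - 2 * R) + 2)"
    proof -
      have "real_of_int ((int r + 1) * M) \<le> real_of_int (k * (int r + M + 2))"
        using up by (simp only: of_int_le_iff)
      thus ?thesis by (simp add: Mr N_R_K_def)
    qed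
    define X where "X = (N - 2 * R)\<^sup>2 + 2 * N - 5 * R - 1"
    define D where "D = N - R + 3"
    have D: "D > 0" using Dpos by (simp add: D_def N_R_K_def)
    have e1: "(N + 1 - 2 * R - K) * D - X = (R + 1) * (N + 1 - 2 * R) - (K - 1) * (R + (N + 1 - 2 * R) + 2)"
      unfolding X_def D_def by (simp add: algebra_simps power2_eq_square)
    have e2: "X + D - (N + 1 - 2 * R - K) * D = K * (R + (N + 1 - 2 * R) + 2) - (R + 1) * (N + 1 - 2 * R)"
      unfolding X_def D_def by (simp add: algebra_simps power2_eq_square)
    have lo: "X / D \<le> real_of_int dstar"
      using e1 low' D by (simp add: dr pos_divide_le_eq)
    have hi: "real_of_int dstar \<le> X / D + 1"
    proof -
      have "real_of_int dstar * D \<le> X + D" using e2 up' by (simp add: dr)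
      hence "real_of_int dstar \<le> (X + D) / D" using D by (simp add: pos_le_divide_eq)
      thus ?thesis using D by (simp add: add_divide_distrib)
    qed
    show ?thesis
    proof (cases "real_of_int dstar = X / D + 1")
      case True thus ?thesis by (simp add: X_def D_def N_R_K_def)
    next
      case False
      hence "real_of_int dstar - 1 < X / D" using hi by linarith
      hence "\<lceil>X / D\<rceil> = dstar" using lo by (simp add: ceiling_unique)
      thus ?thesis by (simp add: X_def D_def N_R_K_def)
    qed
  qed
qed

end
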